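(* Every vertex of a friendship digraph has outdegree at least $2$.
   Context: All digraphs are finite and have neither loops nor parallel arcs (a pair of opposite arcs $(u,v)$ and $(v,u)$ is allowed). A friendship digraph is a nontrivial digraph (at least two vertices) in which any two distinct vertices have exactly one common out-neighbor. *)

theory Defs
  imports Main
begin

text \<open>A digraph is given by a finite vertex set V and an arc set A of ordered pairs
  of vertices, without loops. Parallel arcs cannot occur (A is a set); opposite
  arcs (u,v),(v,u) are allowed.\<close>

definition digraph :: "'a set \<Rightarrow> ('a \<times> 'a) set \<Rightarrow> bool" where
  "digraph V A \<longleftrightarrow> finite V \<and> A \<subseteq> V \<times> V \<and> (\<forall>v. (v, v) \<notin> A)"

definition out_nbrs :: "'a set \<Rightarrow> ('a \<times> 'a) set \<Rightarrow> 'a \<Rightarrow> 'a set" where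
  "out_nbrs V A u = {w \<in> V. (u, w) \<in> A}"

definition outdegree :: "'a set \<Rightarrow> ('a \<times> 'a) set \<Rightarrow> 'a \<Rightarrow> nat" where
  "outdegree V A u = card (out_nbrs V A u)"

definition friendship_digraph :: "'a set \<Rightarrow> ('a \<times> 'a) set \<Rightarrow> bool" where
  "friendship_digraph V A \<longleftrightarrow> digraph V A \<and> card V \<ge> 2 \<and>
     (\<forall>u\<in>V. \<forall>v\<in>V. u \<noteq> v \<longrightarrow> (\<exists>!w. w \<in> out_nbrs V A u \<inter> out_nbrs V A v))"

end

theory Submission
  imports Defs
begin

theorem lemma2p1:
  assumes "friendship_digraph V A" and "v \<in> V"
  shows "outdegree V A v \<ge> 2"
proof -
  have dg: "finite V" "A \<subseteq> V \<times> V" "\<And>x. (x, x) \<notin> A" and c2: "card V \<ge> 2"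
    and fr: "\<And>u w. u \<in> V \<Longrightarrow> w \<in> V \<Longrightarrow> u \<noteq> w \<Longrightarrow> \<exists>!x. x \<in> out_nbrs V A u \<inter> out_nbrs V A w"
    using assms(1) unfolding friendship_digraph_def digraph_def by auto
  have fin: "finite (out_nbrs V A v)" using dg(1) unfolding out_nbrs_def by auto
  obtain u where u: "u \<in> V" "u \<noteq> v"
  proof -
    have "\<not> V \<subseteq> {v}" using c2 card_mono[of "{v}" V] by fastforce
    then show ?thesis using that by auto
  qed
  obtain w where w: "w \<in> out_nbrs V A v" using fr[OF assms(2) u(1)] u(2) by force
  have wv: "w \<noteq> v" "w \<in> V" using w dg(3) unfolding out_nbrs_def by auto
  obtain x where x: "x \<in> out_nbrs V A v \<inter> out_nbrs V A w"
    using fr[OF assms(2) wv(2)] wv(1) by force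
  have "x \<noteq> w" using x dg(3) unfolding out_nbrs_def by auto
  then have "{w, x} \<subseteq> out_nbrs V A v" using w x by auto
  then have "card {w, x} \<le> card (out_nbrs V A v)" using fin card_mono by blast
  then show ?thesis using \<open>x \<noteq> w\<close> unfolding outdegree_def by auto
qed

end
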